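(* For every $k\geq0$, the Margolis homology groups $M_*(W_2(k);Q_0)$ and $M_*(W_2(k);Q_1)$ are both one-dimensional $\mathbb{F}_p$-vector spaces. Thus $W_2(k)$ is an invertible $E(1)_*$-comodule (i.e. invertible in the stable category of $E(1)$-modules).
   Context: Let $p$ be an odd prime and $(A/\!/E(2))_*=\mathbb{F}_p[\zeta_1,\zeta_2,\ldots]\otimes E(\overline{\tau}_3,\overline{\tau}_4,\ldots)$ (subalgebra of the mod $p$ dual Steenrod algebra; $\zeta_n,\overline{\tau}_n$ are the conjugates of Milnor's $\xi_n,\tau_n$). It is a module over $E(1)=E(Q_0,Q_1)$ (Milnor primitives; equivalently a comodule over $E(1)_*=E(\overline{\tau}_0,\overline{\tau}_1)$), each $Q_i$ acting as a graded derivation with $Q_i\zeta_n=0$ and, for $k\ge1$, $Q_0\overline{\tau}_{2+k}=\zeta_{2+k}$, $Q_1\overline{\tau}_{2+k}=\zeta_{1+k}^p$. The weight of a monomial is defined by $\mathrm{wt}(\zeta_n)=\mathrm{wt}(\overline{\tau}_n)=p^n$ and $\mathrm{wt}(xy)=\mathrm{wt}(x)+\mathrm{wt}(y)$. Let $R=\mathbb{F}_p[\zeta_2,\zeta_3,\ldots]\otimes E(\overline{\tau}_3,\overline{\tau}_4,\ldots)\subseteq (A/\!/E(2))_*$, an $E(1)_*$-subcomodule algebra, and let $W_2(k)$ be the $\mathbb{F}_p$-span of the monomials $m\in R$ with $\mathrm{wt}(m)=p^2k$. Margolis homology is $M_*(N;Q_i)=\ker Q_i/\operatorname{im}Q_i$.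 *)

theory Defs
  imports Main "HOL-Library.Function_Algebras" "Berlekamp_Zassenhaus.Finite_Field"
begin

text \<open>A monomial of R = F_p[zeta_2, zeta_3, ...] (x) E(taubar_3, taubar_4, ...) is
  encoded as a pair (e, S): e n is the exponent of zeta_n (finite support, zero for n < 2),
  and S is the (finite) set of indices n >= 3 of the exterior generators taubar_n occurring,
  written in increasing order of the index.\<close>

type_synonym mono = "(nat \<Rightarrow> nat) \<times> nat set"

definition is_Rmono :: "mono \<Rightarrow> bool" where
  "is_Rmono m \<longleftrightarrow> finite {n. fst m n \<noteq> 0} \<and> (\<forall>n<2. fst m n = 0)
     \<and> finite (snd m) \<and> snd m \<subseteq> {3..}"

definition wt :: "nat \<Rightarrow> mono \<Rightarrow> nat" where
  "wt p m = (\<Sum>n\<in>{n. fst m n \<noteq> 0}. fst m n * p ^ n) + (\<Sum>n\<in>snd m. p ^ n)"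

definition W2basis :: "nat \<Rightarrow> nat \<Rightarrow> mono set" where
  "W2basis p k = {m. is_Rmono m \<and> wt p m = p ^ 2 * k}"

text \<open>Effect on the polynomial part of replacing taubar_s by Q_i(taubar_s):
  Q_0 taubar_s = zeta_s, Q_1 taubar_s = zeta_(s-1)^p (for s >= 3).\<close>
definition Qtarget :: "nat \<Rightarrow> nat \<Rightarrow> nat \<Rightarrow> (nat \<Rightarrow> nat) \<Rightarrow> (nat \<Rightarrow> nat)" where
  "Qtarget i p s e = (if i = 0 then e(s := e s + 1) else e(s - 1 := e (s - 1) + p))"

text \<open>Coefficient of the monomial m' in Q_i(m), Q_i a graded derivation of odd degree
  killing all zeta_n: Q_i(zeta^e taubar_s1 ... taubar_sr)
  = sum_j (-1)^(j-1) zeta^e taubar_s1 ... Q_i(taubar_sj) ... taubar_sr.\<close>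
definition Qcoef :: "nat \<Rightarrow> nat \<Rightarrow> mono \<Rightarrow> mono \<Rightarrow> 'f::comm_ring_1" where
  "Qcoef i p m m' = (\<Sum>s\<in>snd m.
      if m' = (Qtarget i p s (fst m), snd m - {s})
      then (-1) ^ card {t\<in>snd m. t < s} else 0)"

definition Wspace :: "nat \<Rightarrow> nat \<Rightarrow> (mono \<Rightarrow> 'f::field) set" where
  "Wspace p k = {v. \<forall>m. v m \<noteq> 0 \<longrightarrow> m \<in> W2basis p k}"

text \<open>The linear map Q_i on W_2(k) (Q_i preserves weight and R).\<close>
definition Qmap :: "nat \<Rightarrow> nat \<Rightarrow> nat \<Rightarrow> (mono \<Rightarrow> 'f::field) \<Rightarrow> (mono \<Rightarrow> 'f)" where
  "Qmap i p k v = (\<lambda>m'. \<Sum>m\<in>W2basis p k. v m * Qcoef i p m m')"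

definition fscale :: "'f::field \<Rightarrow> (mono \<Rightarrow> 'f) \<Rightarrow> (mono \<Rightarrow> 'f)" where
  "fscale c v = (\<lambda>x. c * v x)"

text \<open>Total dimension of the Margolis homology ker Q_i / im Q_i on W_2(k),
  computed as dim(ker) - dim(im) (im is contained in ker since Q_i^2 = 0).\<close>
definition margolis_dim :: "'f::field itself \<Rightarrow> nat \<Rightarrow> nat \<Rightarrow> nat \<Rightarrow> nat" where
  "margolis_dim _ i p k =
     vector_space.dim (fscale :: 'f \<Rightarrow> _) {v \<in> (Wspace p k :: (mono \<Rightarrow> 'f) set). Qmap i p k v = 0}
     - vector_space.dim (fscale :: 'f \<Rightarrow> _) (Qmap i p k ` (Wspace p k :: (mono \<Rightarrow> 'f) set))"

end

theory Submission
  imports Defs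
begin


definition gg :: "nat \<Rightarrow> nat \<Rightarrow> nat" where "gg i s = (if i = 0 then s else s - 1)"
definition qq :: "nat \<Rightarrow> nat \<Rightarrow> nat" where "qq i p = (if i = 0 then 1 else p)"

lemma Qtarget_alt: "Qtarget i p s e = e(gg i s := e (gg i s) + qq i p)"
  by (simp add: Qtarget_def gg_def qq_def)

lemma qq_pow: "1 \<le> s \<Longrightarrow> qq i p * p ^ (gg i s) = p ^ s"
  by (cases s) (auto simp: qq_def gg_def)

lemma gg_inj: "1 \<le> s \<Longrightarrow> 1 \<le> t \<Longrightarrow> gg i s = gg i t \<longleftrightarrow> s = t"
  by (auto simp: gg_def)

lemma gg_ge2: "3 \<le> s \<Longrightarrow> 2 \<le> gg i s"
  by (auto simp: gg_def)

lemma wt_bound: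
  assumes "finite F" "{n. fst m n \<noteq> 0} \<subseteq> F"
  shows "wt p m = (\<Sum>n\<in>F. fst m n * p ^ n) + (\<Sum>n\<in>snd m. p ^ n)"
proof -
  have "(\<Sum>n\<in>{n. fst m n \<noteq> 0}. fst m n * p ^ n) = (\<Sum>n\<in>F. fst m n * p ^ n)"
    by (rule sum.mono_neutral_left) (use assms in auto)
  thus ?thesis by (simp add: wt_def)
qed

lemma Rmono_Qtarget:
  assumes "is_Rmono m" "s \<in> snd m"
  shows "is_Rmono (Qtarget i p s (fst m), snd m - {s})"
proof -
  have s3: "3 \<le> s" using assms by (auto simp: is_Rmono_def)
  have "{n. Qtarget i p s (fst m) n \<noteq> 0} \<subseteq> insert (gg i s) {n. fst m n \<noteq> 0}"
    by (auto simp: Qtarget_alt)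
  hence "finite {n. Qtarget i p s (fst m) n \<noteq> 0}"
    using assms(1) by (auto simp: is_Rmono_def intro: finite_subset)
  moreover have "\<forall>n<2. Qtarget i p s (fst m) n = 0"
    using assms(1) gg_ge2[OF s3, of i] by (auto simp: is_Rmono_def Qtarget_alt)
  ultimately show ?thesis using assms(1) by (auto simp: is_Rmono_def)
qed

lemma wt_Qtarget:
  assumes "is_Rmono m" "s \<in> snd m"
  shows "wt p (Qtarget i p s (fst m), snd m - {s}) = wt p m"
proof -
  obtain e S where m: "m = (e, S)" by (cases m)
  have s3: "3 \<le> s" using assms by (auto simp: is_Rmono_def)
  define F where "F = insert (gg i s) {n. e n \<noteq> 0}"
  have fF: "finite F" using assms(1) by (auto simp: F_def is_Rmono_def m)
  have fS: "finite S" using assms(1) by (auto simp: is_Rmono_def m)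
  have 1: "wt p m = (\<Sum>n\<in>F. e n * p ^ n) + (\<Sum>n\<in>S. p ^ n)"
    using wt_bound[OF fF, of m p] by (auto simp: m F_def)
  have sub: "{n. fst (Qtarget i p s e, S - {s}) n \<noteq> 0} \<subseteq> F"
    by (auto simp: F_def Qtarget_alt)
  have 2: "wt p (Qtarget i p s e, S - {s}) = (\<Sum>n\<in>F. Qtarget i p s e n * p ^ n) + (\<Sum>n\<in>S - {s}. p ^ n)"
    using wt_bound[OF fF sub, of p] by simp
  have "(\<Sum>n\<in>F. Qtarget i p s e n * p ^ n) = (\<Sum>n\<in>F. e n * p ^ n + (if n = gg i s then qq i p * p ^ n else 0))"
    by (rule sum.cong) (auto simp: Qtarget_alt algebra_simps)
  also have "\<dots> = (\<Sum>n\<in>F. e n * p ^ n) + qq i p * p ^ (gg i s)"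
    using fF by (simp add: sum.distrib F_def)
  also have "\<dots> = (\<Sum>n\<in>F. e n * p ^ n) + p ^ s" using qq_pow[of s i p] s3 by simp
  finally have 3: "(\<Sum>n\<in>F. Qtarget i p s e n * p ^ n) = (\<Sum>n\<in>F. e n * p ^ n) + p ^ s" .
  have 4: "(\<Sum>n\<in>S. p ^ n) = p ^ s + (\<Sum>n\<in>S - {s}. p ^ n)"
    using fS assms(2) m sum.remove by fastforce
  show ?thesis using 1 2 3 4 m by simp
qed

definition act :: "nat \<Rightarrow> nat \<Rightarrow> mono \<Rightarrow> nat set" where
  "act i p m = {s. 3 \<le> s \<and> (qq i p \<le> fst m (gg i s) \<or> s \<in> snd m)}"
definition lst :: "nat \<Rightarrow> nat \<Rightarrow> mono \<Rightarrow> nat" where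
  "lst i p m = (LEAST s. s \<in> act i p m)"
definition isup :: "nat \<Rightarrow> nat \<Rightarrow> mono \<Rightarrow> bool" where
  "isup i p m \<longleftrightarrow> act i p m \<noteq> {} \<and> lst i p m \<notin> snd m"
definition upm :: "nat \<Rightarrow> nat \<Rightarrow> mono \<Rightarrow> mono" where
  "upm i p m = ((fst m)(gg i (lst i p m) := fst m (gg i (lst i p m)) - qq i p), insert (lst i p m) (snd m))"
definition sg :: "nat set \<Rightarrow> nat \<Rightarrow> 'f::comm_ring_1" where
  "sg S s = (-1) ^ card {t\<in>S. t < s}"

lemma Qcoef_sg: "Qcoef i p m m' = (\<Sum>s\<in>snd m. if m' = (Qtarget i p s (fst m), snd m - {s}) then sg (snd m) s else 0)"
  unfolding Qcoef_def sg_def by (rule refl)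

lemma lst_props:
  assumes "act i p m \<noteq> {}"
  shows "lst i p m \<in> act i p m" "\<And>t. t < lst i p m \<Longrightarrow> t \<notin> act i p m"
proof -
  from assms obtain x where "x \<in> act i p m" by auto
  thus "lst i p m \<in> act i p m" unfolding lst_def by (rule LeastI)
  show "\<And>t. t < lst i p m \<Longrightarrow> t \<notin> act i p m" unfolding lst_def using not_less_Least by blast
qed

lemma lst_char:
  assumes "n \<in> act i p m" "\<And>t. t < n \<Longrightarrow> t \<notin> act i p m"
  shows "lst i p m = n"
  unfolding lst_def
  by (rule Least_equality) (use assms in \<open>auto simp: not_less[symmetric]\<close>)

lemma S_act: "is_Rmono m \<Longrightarrow> s \<in> snd m \<Longrightarrow> s \<in> act i p m"
  by (auto simp: is_Rmono_def act_def)

lemma lst_ms: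
  assumes R: "is_Rmono m" and sS: "s \<in> snd m"
  shows "act i p (Qtarget i p s (fst m), snd m - {s}) \<noteq> {}"
    "lst i p (Qtarget i p s (fst m), snd m - {s}) = lst i p m"
proof -
  obtain e S where m: "m = (e, S)" by (cases m)
  have ne: "act i p m \<noteq> {}" using S_act[OF R sS] by auto
  define n where "n = lst i p m"
  have nA: "n \<in> act i p m" and lt: "\<And>t. t < n \<Longrightarrow> t \<notin> act i p m"
    using lst_props[OF ne] n_def by auto
  have s3: "3 \<le> s" and n3: "3 \<le> n" using R sS nA by (auto simp: is_Rmono_def act_def)
  have sn: "n \<le> s" using lt S_act[OF R sS] not_less by blast
  have A: "n \<in> act i p (Qtarget i p s e, S - {s})"
  proof (cases "s = n")
    case True thus ?thesis using n3 by (auto simp: act_def Qtarget_alt)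
  next
    case False
    have "gg i n \<noteq> gg i s" using gg_inj[of n s i] False n3 s3 by auto
    thus ?thesis using nA False by (auto simp: act_def Qtarget_alt m)
  qed
  have B: "t \<notin> act i p (Qtarget i p s e, S - {s})" if "t < n" for t
  proof
    assume t: "t \<in> act i p (Qtarget i p s e, S - {s})"
    hence t3: "3 \<le> t" by (auto simp: act_def)
    have "gg i t \<noteq> gg i s" using gg_inj[of t s i] that sn t3 s3 by auto
    hence "t \<in> act i p m" using t by (auto simp: act_def Qtarget_alt m)
    thus False using lt that by auto
  qed
  show "act i p (Qtarget i p s (fst m), snd m - {s}) \<noteq> {}" using A m by auto
  show "lst i p (Qtarget i p s (fst m), snd m - {s}) = lst i p m"
    using lst_char[of n i p "(Qtarget i p s e, S - {s})"] A B m n_def by auto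
qed

lemma up_props:
  assumes R: "is_Rmono m" and up: "isup i p m"
  shows "lst i p m \<notin> snd m" "qq i p \<le> fst m (gg i (lst i p m))" "3 \<le> lst i p m"
    "lst i p m \<in> snd (upm i p m)"
    "Qtarget i p (lst i p m) (fst (upm i p m)) = fst m"
    "snd (upm i p m) - {lst i p m} = snd m"
    "is_Rmono (upm i p m)" "wt p (upm i p m) = wt p m"
proof -
  obtain e S where m: "m = (e, S)" by (cases m)
  define n where "n = lst i p m"
  have ne: "act i p m \<noteq> {}" and nS: "n \<notin> S" using up by (auto simp: isup_def n_def m)
  have nA: "n \<in> act i p m" using lst_props[OF ne] n_def by auto
  have q: "qq i p \<le> e (gg i n)" and n3: "3 \<le> n" using nA nS by (auto simp: act_def m)
  show "lst i p m \<notin> snd m" "qq i p \<le> fst m (gg i (lst i p m))" "3 \<le> lst i p m"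
    using nS q n3 by (auto simp: n_def m)
  show "lst i p m \<in> snd (upm i p m)" by (simp add: upm_def)
  have q': "qq i p \<le> fst m (gg i n)" using q m by simp
  show QT: "Qtarget i p (lst i p m) (fst (upm i p m)) = fst m"
    unfolding upm_def Qtarget_alt n_def[symmetric] using q' by (intro ext) simp
  have nS': "n \<notin> snd m" using nS m by simp
  show SS: "snd (upm i p m) - {lst i p m} = snd m"
    unfolding upm_def n_def[symmetric] using nS' by auto
  have g2: "2 \<le> gg i n" using gg_ge2[OF n3] .
  have fu: "fst (upm i p m) = (fst m)(gg i n := fst m (gg i n) - qq i p)" by (simp add: upm_def n_def)
  have su: "snd (upm i p m) = insert n (snd m)" by (simp add: upm_def n_def)
  have R1: "finite {x. fst m x \<noteq> 0}" "\<forall>x<2. fst m x = 0" "finite (snd m)" "snd m \<subseteq> {3..}"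
    using R by (auto simp: is_Rmono_def)
  have sub: "{x. fst (upm i p m) x \<noteq> 0} \<subseteq> {x. fst m x \<noteq> 0}"
    unfolding fu by auto
  have c1: "finite {x. fst (upm i p m) x \<noteq> 0}" using finite_subset[OF sub R1(1)] .
  have c2: "\<forall>x<2. fst (upm i p m) x = 0" unfolding fu using R1(2) g2 by auto
  have c3: "finite (snd (upm i p m))" unfolding su using R1(3) by simp
  have c4: "snd (upm i p m) \<subseteq> {3..}" unfolding su using R1(4) n3 by auto
  show RU: "is_Rmono (upm i p m)" unfolding is_Rmono_def using c1 c2 c3 c4 by blast
  have "wt p (Qtarget i p n (fst (upm i p m)), snd (upm i p m) - {n}) = wt p (upm i p m)"
    by (rule wt_Qtarget[OF RU]) (simp add: upm_def n_def)
  thus "wt p (upm i p m) = wt p m" using QT SS n_def by simp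
qed


lemma core_aux:
  fixes m'' :: mono and e :: "nat \<Rightarrow> nat" and S :: "nat set"
  defines "m \<equiv> (e, S)"
  assumes R: "is_Rmono m"
  shows "(if isup i p m then Qcoef i p (upm i p m) m'' else (0::'f::comm_ring_1))
     + (\<Sum>s\<in>snd m. sg (snd m) s * (if isup i p (Qtarget i p s (fst m), snd m - {s})
           \<and> upm i p (Qtarget i p s (fst m), snd m - {s}) = m'' then 1 else 0))
     = (if m'' = m \<and> act i p m \<noteq> {} then 1 else 0)"
proof -
  have m: "fst m = e" "snd m = S" by (simp_all add: m_def)
  have fS: "finite S" using R by (auto simp: is_Rmono_def m)
  show ?thesis
  proof (cases "act i p m = {}")
    case True
    hence "S = {}" using S_act[OF R] m by auto
    thus ?thesis using True m by (simp add: isup_def)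
  next
    case ne: False
    define n where "n = lst i p m"
    have nA: "n \<in> act i p m" and lt: "\<And>t. t < n \<Longrightarrow> t \<notin> act i p m"
      using lst_props[OF ne] n_def by auto
    have n3: "3 \<le> n" using nA by (auto simp: act_def)
    have Sge: "n \<le> t" if "t \<in> S" for t
    proof -
      have "t \<in> act i p m" using S_act[OF R, of t] that m by simp
      thus ?thesis using lt not_less by blast
    qed
    have lms: "lst i p (Qtarget i p s e, S - {s}) = n"
      "act i p (Qtarget i p s e, S - {s}) \<noteq> {}" if "s \<in> S" for s
      using lst_ms[OF R, of s i p] that m n_def by auto
    show ?thesis
    proof (cases "n \<in> S")
      case True
      have nu: "\<not> isup i p m" using True by (simp add: isup_def n_def m)
      have sg1: "sg S n = (1::'f)"
      proof -
        have E: "{t \<in> S. t < n} = {}" using Sge by force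
        show ?thesis unfolding sg_def E by simp
      qed
      have um: "upm i p (Qtarget i p n e, S - {n}) = m"
        using lms(1)[OF True] True by (auto simp: upm_def Qtarget_alt m_def)
      have "(\<Sum>s\<in>S. sg S s * (if isup i p (Qtarget i p s e, S - {s})
           \<and> upm i p (Qtarget i p s e, S - {s}) = m'' then 1 else 0))
          = (\<Sum>s\<in>S. if s = n then sg S n * (if m = m'' then 1 else (0::'f)) else 0)"
      proof (rule sum.cong[OF refl])
        fix s assume sS: "s \<in> S"
        have L: "lst i p (Qtarget i p s e, S - {s}) = n" "act i p (Qtarget i p s e, S - {s}) \<noteq> {}"
          using lms sS by auto
        show "sg S s * (if isup i p (Qtarget i p s e, S - {s})
           \<and> upm i p (Qtarget i p s e, S - {s}) = m'' then 1 else 0)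
          = (if s = n then sg S n * (if m = m'' then 1 else (0::'f)) else 0)"
        proof (cases "s = n")
          case True then show ?thesis using um L by (simp add: isup_def)
        next
          case F: False
          then have "\<not> isup i p (Qtarget i p s e, S - {s})" using L True by (simp add: isup_def)
          then show ?thesis using F by simp
        qed
      qed
      also have "\<dots> = sg S n * (if m = m'' then 1 else 0)" using True fS by simp
      finally show ?thesis using nu sg1 ne m by auto
    next
      case False
      have up: "isup i p m" using False ne by (simp add: isup_def n_def m)
      have q: "qq i p \<le> e (gg i n)" using nA False by (auto simp: act_def m)
      define e' where "e' = e(gg i n := e (gg i n) - qq i p)"
      have u: "upm i p m = (e', insert n S)" by (simp add: upm_def e'_def n_def[symmetric] m)
      have Qn: "Qtarget i p n e' = e" using q by (auto simp: Qtarget_alt e'_def)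
      have sgn: "sg (insert n S) n = (1::'f)"
      proof -
        have E: "{t \<in> insert n S. t < n} = {}" using Sge by force
        show ?thesis unfolding sg_def E by simp
      qed
      have sgs: "sg (insert n S) s = - (sg S s :: 'f)" if "s \<in> S" for s
      proof -
        have "n < s" using Sge[OF that] False that by (cases "n = s") auto
        hence "{t \<in> insert n S. t < s} = insert n {t \<in> S. t < s}" by auto
        hence "card {t \<in> insert n S. t < s} = Suc (card {t \<in> S. t < s})"
          using False fS by simp
        thus ?thesis by (simp add: sg_def)
      qed
      have gne: "gg i n \<noteq> gg i s" if "s \<in> S" for s
        using gg_inj[of n s i] n3 Sge[OF that] False that by auto
      have "Qcoef i p (upm i p m) m'' = (\<Sum>s\<in>insert n S. if m'' = (Qtarget i p s e', insert n S - {s}) then sg (insert n S) s else (0::'f))"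
        unfolding Qcoef_sg u snd_conv fst_conv by (rule refl)
      also have "\<dots> = (if m'' = m then 1 else 0) +
          (\<Sum>s\<in>S. if m'' = (Qtarget i p s e', insert n S - {s}) then sg (insert n S) s else (0::'f))"
        using fS False by (simp add: sum.insert Qn sgn m_def)
      also have "(\<Sum>s\<in>S. if m'' = (Qtarget i p s e', insert n S - {s}) then sg (insert n S) s else (0::'f))
          = - (\<Sum>s\<in>S. sg S s * (if isup i p (Qtarget i p s e, S - {s})
           \<and> upm i p (Qtarget i p s e, S - {s}) = m'' then 1 else 0))"
        unfolding sum_negf[symmetric]
      proof (rule sum.cong[OF refl])
        fix s assume sS: "s \<in> S"
        have "s \<noteq> n" using sS False by auto
        hence "insert n S - {s} = insert n (S - {s})" by auto
        moreover have "isup i p (Qtarget i p s e, S - {s})"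
          using lms[OF sS] False by (simp add: isup_def)
        moreover have "upm i p (Qtarget i p s e, S - {s}) = (Qtarget i p s e', insert n (S - {s}))"
        proof -
          have "upm i p (Qtarget i p s e, S - {s}) = ((Qtarget i p s e)(gg i n := Qtarget i p s e (gg i n) - qq i p), insert n (S - {s}))"
            by (simp add: upm_def lms(1)[OF sS])
          also have "(Qtarget i p s e)(gg i n := Qtarget i p s e (gg i n) - qq i p) = Qtarget i p s e'"
            using gne[OF sS] by (intro ext) (simp add: Qtarget_alt e'_def)
          finally show ?thesis .
        qed
        ultimately show "(if m'' = (Qtarget i p s e', insert n S - {s}) then sg (insert n S) s else 0)
          = - (sg S s * (if isup i p (Qtarget i p s e, S - {s})
           \<and> upm i p (Qtarget i p s e, S - {s}) = m'' then 1 else (0::'f)))"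
          using sgs[OF sS] by auto
      qed
      finally show ?thesis using up ne m by simp
    qed
  qed
qed

lemma core:
  fixes m m'' :: mono
  assumes R: "is_Rmono m"
  shows "(if isup i p m then Qcoef i p (upm i p m) m'' else (0::'f::comm_ring_1))
     + (\<Sum>s\<in>snd m. sg (snd m) s * (if isup i p (Qtarget i p s (fst m), snd m - {s})
           \<and> upm i p (Qtarget i p s (fst m), snd m - {s}) = m'' then 1 else 0))
     = (if m'' = m \<and> act i p m \<noteq> {} then 1 else 0)"
proof -
  obtain e S where m': "m = (e, S)" by (cases m)
  have R': "is_Rmono (e, S)" using R m' by simp
  from core_aux[OF R', of i p m''] show ?thesis unfolding m' fst_conv snd_conv .
qed



lemma sign_swap:
  assumes "finite S" "s \<in> S" "t \<in> S" "s < t"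
  shows "sg S s * sg (S - {s}) t = - (sg S t * sg (S - {t}) s :: 'f::comm_ring_1)"
proof -
  have A: "{u \<in> S - {t}. u < s} = {u \<in> S. u < s}" using assms by auto
  have B: "{u \<in> S. u < t} = insert s {u \<in> S - {s}. u < t}" using assms by auto
  have "card {u \<in> S. u < t} = Suc (card {u \<in> S - {s}. u < t})"
    unfolding B using assms(1) by simp
  hence C: "sg S t = - (sg (S - {s}) t :: 'f)" by (simp add: sg_def)
  have D: "sg (S - {t}) s = (sg S s :: 'f)" unfolding sg_def A ..
  show ?thesis by (simp add: C D)
qed

lemma Qtarget_comm:
  "gg i s \<noteq> gg i t \<Longrightarrow> Qtarget i p s (Qtarget i p t e) = Qtarget i p t (Qtarget i p s e)"
  by (rule ext) (simp add: Qtarget_alt)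

lemma dd_zero_aux:
  assumes R: "is_Rmono (e, S)" and two: "(2::'f::field) \<noteq> 0"
  shows "(\<Sum>s\<in>S. sg S s * Qcoef i p (Qtarget i p s e, S - {s}) m'') = (0::'f)"
proof -
  have fS: "finite S" and S3: "S \<subseteq> {3..}" using R by (auto simp: is_Rmono_def)
  define f where "f = (\<lambda>(s, t). sg S s * (if m'' = (Qtarget i p t (Qtarget i p s e), S - {s} - {t})
      then sg (S - {s}) t else (0::'f)))"
  define P where "P = Sigma S (\<lambda>s. S - {s})"
  have fP: "finite P" using fS by (simp add: P_def)
  have X: "(\<Sum>s\<in>S. sg S s * Qcoef i p (Qtarget i p s e, S - {s}) m'') = sum f P"
  proof -
    have "(\<Sum>s\<in>S. sg S s * Qcoef i p (Qtarget i p s e, S - {s}) m'')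
        = (\<Sum>s\<in>S. \<Sum>t\<in>S - {s}. f (s, t))"
      unfolding Qcoef_sg fst_conv snd_conv f_def by (simp add: sum_distrib_left)
    also have "\<dots> = sum f P" unfolding P_def using fS by (simp add: sum.Sigma)
    finally show ?thesis .
  qed
  have sw: "sum f P = sum (\<lambda>(s, t). f (t, s)) P"
    by (rule sum.reindex_bij_witness[where i = "\<lambda>(s, t). (t, s)" and j = "\<lambda>(s, t). (t, s)"])
       (auto simp: P_def)
  have neg: "f (t, s) = - f (s, t)" if "(s, t) \<in> P" for s t
  proof -
    have st: "s \<in> S" "t \<in> S" "s \<noteq> t" using that by (auto simp: P_def)
    have s3: "3 \<le> s" "3 \<le> t" using st S3 by auto
    have g: "gg i s \<noteq> gg i t" using gg_inj[of s t i] st s3 by simp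
    have c: "Qtarget i p s (Qtarget i p t e) = Qtarget i p t (Qtarget i p s e)"
      using Qtarget_comm[OF g] .
    have d: "S - {t} - {s} = S - {s} - {t}" by auto
    have sgn: "sg S t * sg (S - {t}) s = - (sg S s * sg (S - {s}) t :: 'f)"
    proof (cases "s < t")
      case True thus ?thesis using sign_swap[OF fS st(1,2) True] by (metis minus_minus)
    next
      case False hence "t < s" using st by auto
      thus ?thesis using sign_swap[OF fS st(2,1)] by simp
    qed
    show ?thesis unfolding f_def using sgn by (simp add: c d)
  qed
  have "sum f P = - sum f P"
  proof -
    have "sum f P = sum (\<lambda>(s, t). f (t, s)) P" by (rule sw)
    also have "\<dots> = sum (\<lambda>x. - f x) P"
      by (rule sum.cong) (auto simp: neg)
    also have "\<dots> = - sum f P" by (simp add: sum_negf)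
    finally show ?thesis .
  qed
  hence "2 * sum f P = 0" by (simp add: algebra_simps)
  hence "sum f P = 0" using two by simp
  thus ?thesis using X by simp
qed

lemma dd_zero:
  assumes R: "is_Rmono m" and two: "(2::'f::field) \<noteq> 0"
  shows "(\<Sum>s\<in>snd m. sg (snd m) s * Qcoef i p (Qtarget i p s (fst m), snd m - {s}) m'') = (0::'f)"
proof -
  obtain e S where m': "m = (e, S)" by (cases m)
  show ?thesis using dd_zero_aux[of e S, OF _ two] R m' by simp
qed

lemma less_pow: "2 \<le> p \<Longrightarrow> n < (p::nat) ^ n"
proof -
  assume "2 \<le> p"
  hence "(2::nat) ^ n \<le> p ^ n" by (rule power_mono) simp
  moreover have "n < 2 ^ n" by (rule less_exp)
  ultimately show ?thesis by (metis less_le_trans)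
qed

lemma finite_B:
  assumes p: "2 \<le> p"
  shows "finite (W2basis p k)"
proof -
  define W where "W = p ^ 2 * k"
  define F where "F = {f::nat\<Rightarrow>nat. \<forall>x. (x \<in> {..W} \<longrightarrow> f x \<in> {..W}) \<and> (x \<notin> {..W} \<longrightarrow> f x = 0)}"
  have fF: "finite F" unfolding F_def by (rule finite_set_of_finite_funs) auto
  have "W2basis p k \<subseteq> F \<times> Pow {..W}"
  proof
    fix m assume mB: "m \<in> W2basis p k"
    have R: "is_Rmono m" and w: "wt p m = W" using mB by (auto simp: W2basis_def W_def)
    have fs: "finite {n. fst m n \<noteq> 0}" "finite (snd m)" using R by (auto simp: is_Rmono_def)
    have le1: "fst m n * p ^ n \<le> W" if "fst m n \<noteq> 0" for n
    proof -
      have "fst m n * p ^ n \<le> (\<Sum>n\<in>{n. fst m n \<noteq> 0}. fst m n * p ^ n)"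
        by (rule member_le_sum) (use that fs in auto)
      thus ?thesis using w by (simp add: wt_def)
    qed
    have le2: "p ^ n \<le> W" if "n \<in> snd m" for n
    proof -
      have "p ^ n \<le> (\<Sum>n\<in>snd m. p ^ n)"
        by (rule member_le_sum) (use that fs in auto)
      thus ?thesis using w by (simp add: wt_def)
    qed
    have "fst m \<in> F"
    proof -
      have "fst m x \<le> W \<and> (W < x \<longrightarrow> fst m x = 0)" for x
      proof (cases "fst m x = 0")
        case False
        have pp: "1 \<le> p ^ x" using p by simp
        have "fst m x * 1 \<le> fst m x * p ^ x" using pp by (rule mult_left_mono) simp
        hence "fst m x \<le> fst m x * p ^ x" by simp
        hence a: "fst m x \<le> W" using le1[OF False] by (rule order.trans)
        have "1 * p ^ x \<le> fst m x * p ^ x" using False by (intro mult_le_mono1) simp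
        hence h: "p ^ x \<le> fst m x * p ^ x" by simp
        have "x < W" using less_le_trans[OF less_pow[OF p] order.trans[OF h le1[OF False]]] .
        thus ?thesis using a by simp
      qed simp
      thus ?thesis by (auto simp: F_def not_le)
    qed
    moreover have "snd m \<subseteq> {..W}"
    proof
      fix x assume "x \<in> snd m"
      thus "x \<in> {..W}" using le2 less_pow[OF p, of x] by fastforce
    qed
    ultimately show "m \<in> F \<times> Pow {..W}" by (cases m) auto
  qed
  moreover have "finite (F \<times> Pow {..W})" using fF by simp
  ultimately show ?thesis by (rule finite_subset)
qed



lemma digit_sum: "(\<Sum>i<N. (k div p ^ i mod p) * p ^ i) = k mod p ^ N" for k p :: nat
proof (induction N)
  case 0 thus ?case by simp
next
  case (Suc N)
  have "k mod (p ^ N * p) = p ^ N * (k div p ^ N mod p) + k mod p ^ N"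
    by (rule mod_mult2_eq)
  hence "k mod p ^ Suc N = p ^ N * (k div p ^ N mod p) + k mod p ^ N"
    by (simp only: power_Suc2)
  thus ?case using Suc by (simp add: mult.commute)
qed

lemma sum_shift1: "(\<Sum>i<Suc N. f i * p ^ i) = f 0 + p * (\<Sum>i<N. f (Suc i) * p ^ i)" for f :: "nat \<Rightarrow> nat"
  by (subst sum.lessThan_Suc_shift) (simp add: sum_distrib_left algebra_simps)

lemma digit_unique:
  fixes f :: "nat \<Rightarrow> nat"
  assumes "\<forall>j. f j < p" "j < N"
  shows "f j = (\<Sum>i<N. f i * p ^ i) div p ^ j mod p"
  using assms
proof (induction j arbitrary: f N)
  case 0
  then obtain N' where N: "N = Suc N'" by (cases N) auto
  have "f 0 < p" using 0 by simp
  thus ?case unfolding N sum_shift1 by simp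
next
  case (Suc j)
  then obtain N' where N: "N = Suc N'" by (cases N) auto
  have f0: "f 0 < p" using Suc by simp
  have IH: "f (Suc j) = (\<Sum>i<N'. f (Suc i) * p ^ i) div p ^ j mod p"
    using Suc.IH[of "\<lambda>i. f (Suc i)" N'] Suc.prems N by simp
  have "(\<Sum>i<N. f i * p ^ i) div p ^ Suc j = (f 0 + p * (\<Sum>i<N'. f (Suc i) * p ^ i)) div p div p ^ j"
    unfolding N sum_shift1 by (simp add: div_mult2_eq)
  also have "(f 0 + p * (\<Sum>i<N'. f (Suc i) * p ^ i)) div p = (\<Sum>i<N'. f (Suc i) * p ^ i)"
    using f0 by simp
  finally show ?case using IH by simp
qed

lemma sum_shift2:
  fixes e :: "nat \<Rightarrow> nat"
  assumes "e 0 = 0" "e 1 = 0"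
  shows "(\<Sum>n<N + 2. e n * p ^ n) = p ^ 2 * (\<Sum>j<N. e (j + 2) * p ^ j)"
proof -
  have "(\<Sum>n<N + 2. e n * p ^ n) = (\<Sum>n<Suc (Suc N). e n * p ^ n)" by simp
  also have "\<dots> = p * (p * (\<Sum>i<N. e (Suc (Suc i)) * p ^ i))"
    using assms unfolding sum_shift1 by simp
  finally show ?thesis by (simp add: power2_eq_square)
qed

definition bz :: "nat \<Rightarrow> nat \<Rightarrow> nat \<Rightarrow> mono" where
  "bz i p k = (if i = 0 then ((\<lambda>n. if n = 2 then k else 0), {})
     else ((\<lambda>n. if 2 \<le> n then k div p ^ (n - 2) mod p else 0), {}))"

lemma bz0_props:
  shows "bz 0 p k \<in> W2basis p k" "act 0 p (bz 0 p k) = {}"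
proof -
  let ?e = "\<lambda>n::nat. if n = 2 then k else 0"
  have R: "is_Rmono (?e, {})" unfolding is_Rmono_def
    by (auto intro: finite_subset[of _ "{2}"])
  have sub0: "{n. fst (?e, {}::nat set) n \<noteq> 0} \<subseteq> {2}" by auto
  have "wt p (?e, {}) = (\<Sum>n\<in>{2}. ?e n * p ^ n) + (\<Sum>n\<in>{}. p ^ n)"
    by (rule wt_bound[OF _ sub0, unfolded fst_conv snd_conv]) simp
  hence "wt p (?e, {}) = p ^ 2 * k" by simp
  thus "bz 0 p k \<in> W2basis p k" using R by (simp add: W2basis_def bz_def)
  show "act 0 p (bz 0 p k) = {}" by (auto simp: act_def bz_def qq_def gg_def)
qed

lemma bz1_props:
  assumes p: "2 \<le> p"
  shows "bz 1 p k \<in> W2basis p k" "act 1 p (bz 1 p k) = {}"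
proof -
  define e where "e = (\<lambda>n::nat. if 2 \<le> n then k div p ^ (n - 2) mod p else 0)"
  have sub: "{n. e n \<noteq> 0} \<subseteq> {..<k + 2}"
  proof
    fix n assume "n \<in> {n. e n \<noteq> 0}"
    hence n2: "2 \<le> n" and nz0: "k div p ^ (n - 2) mod p \<noteq> 0" by (auto simp: e_def split: if_splits)
    have nz: "k div p ^ (n - 2) \<noteq> 0" using nz0 by (metis mod_0)
    show "n \<in> {..<k + 2}"
    proof (rule ccontr)
      assume "n \<notin> {..<k + 2}"
      hence "k \<le> n - 2" by auto
      hence "p ^ k \<le> p ^ (n - 2)" using p by (intro power_increasing) auto
      hence "k < p ^ (n - 2)" using less_pow[OF p, of k] by simp
      thus False using nz by simp
    qed
  qed
  have R: "is_Rmono (e, {})" unfolding is_Rmono_def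
    using finite_subset[OF sub] by (auto simp: e_def)
  have "wt p (e, {}) = (\<Sum>n\<in>{..<k+2}. e n * p ^ n) + (\<Sum>n\<in>{}. p ^ n)"
    using wt_bound[of "{..<k+2}" "(e, {})" p] sub by simp
  also have "\<dots> = p ^ 2 * (\<Sum>j<k. e (j + 2) * p ^ j)"
    unfolding sum.empty add_0_right by (rule sum_shift2) (simp_all add: e_def)
  also have "(\<Sum>j<k. e (j + 2) * p ^ j) = (\<Sum>j<k. (k div p ^ j mod p) * p ^ j)"
    by (simp add: e_def)
  also have "\<dots> = k" using digit_sum[of k p k] less_pow[OF p, of k] by simp
  finally have "wt p (e, {}) = p ^ 2 * k" .
  thus "bz 1 p k \<in> W2basis p k" using R by (simp add: W2basis_def bz_def e_def)
  have np: "\<And>x. \<not> p \<le> x mod p" using p by (simp add: not_le)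
  show "act 1 p (bz 1 p k) = {}" using np by (auto simp: act_def bz_def qq_def gg_def)
qed

lemma bz0_unique_aux:
  assumes mB: "(e, S) \<in> W2basis p k" and a: "act 0 p (e, S) = {}" and p: "2 \<le> p"
  shows "(e, S) = bz 0 p k"
proof -
  have R: "is_Rmono (e, S)" and w: "wt p (e, S) = p ^ 2 * k" using mB by (auto simp: W2basis_def)
  have S: "S = {}"
  proof -
    have "s \<notin> S" for s using S_act[OF R, of s 0 p] a by auto
    thus ?thesis by auto
  qed
  have z: "e n = 0" if "n \<noteq> 2" for n
  proof (cases "n < 2")
    case True thus ?thesis using R by (simp add: is_Rmono_def)
  next
    case False
    hence "n \<notin> act 0 p (e, S)" using a by simp
    hence "\<not> 1 \<le> e n" using False that unfolding act_def qq_def gg_def by simp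
    thus ?thesis by simp
  qed
  have sub2: "{n. fst (e, S) n \<noteq> 0} \<subseteq> {2}"
  proof
    fix x assume "x \<in> {n. fst (e, S) n \<noteq> 0}"
    hence ex: "e x \<noteq> 0" by simp
    show "x \<in> {2}"
    proof (rule ccontr)
      assume "x \<notin> {2}"
      hence "e x = 0" using z by simp
      thus False using ex by simp
    qed
  qed
  have A: "wt p (e, S) = (\<Sum>n\<in>{2}. e n * p ^ n) + (\<Sum>n\<in>S. p ^ n)"
    by (rule wt_bound[OF _ sub2, unfolded fst_conv snd_conv]) simp
  have "p ^ 2 * e 2 = p ^ 2 * k" using A w S by (simp add: mult.commute)
  moreover have "p ^ 2 \<noteq> 0" using p by simp
  ultimately have e2: "e 2 = k" using mult_left_cancel[of "p ^ 2" "e 2" k] by simp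
  have "e = (\<lambda>n. if n = 2 then k else 0)"
  proof
    fix n show "e n = (if n = 2 then k else 0)" using z e2 by (cases "n = 2") auto
  qed
  thus ?thesis using S by (simp add: bz_def)
qed

lemma bz1_unique_aux:
  assumes mB: "(e, S) \<in> W2basis p k" and a: "act 1 p (e, S) = {}" and p: "2 \<le> p"
  shows "(e, S) = bz 1 p k"
proof -
  have R: "is_Rmono (e, S)" and w: "wt p (e, S) = p ^ 2 * k" using mB by (auto simp: W2basis_def)
  have S: "S = {}"
  proof -
    have "s \<notin> S" for s using S_act[OF R, of s 1 p] a by auto
    thus ?thesis by auto
  qed
  have e01: "e 0 = 0" "e 1 = 0" using R by (auto simp: is_Rmono_def)
  have dig: "e n < p" if "2 \<le> n" for n
  proof -
    have "Suc n \<notin> act 1 p (e, S)" using a by simp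
    hence "\<not> p \<le> e n" using that unfolding act_def qq_def gg_def by simp
    thus ?thesis by simp
  qed
  have "finite {n. e n \<noteq> 0}" using R by (auto simp: is_Rmono_def)
  then obtain N where N: "{n. e n \<noteq> 0} \<subseteq> {..<N}" using finite_nat_bounded by blast
  have sumk: "(\<Sum>j<M. e (j + 2) * p ^ j) = k" if "N \<le> M" for M
  proof -
    have sub3: "{n. fst (e, S) n \<noteq> 0} \<subseteq> {..<M+2}" using N that by auto
    have A: "wt p (e, S) = (\<Sum>n\<in>{..<M+2}. e n * p ^ n) + (\<Sum>n\<in>S. p ^ n)"
      by (rule wt_bound[OF finite_lessThan sub3, unfolded fst_conv snd_conv])
    have "p ^ 2 * k = (\<Sum>n\<in>{..<M+2}. e n * p ^ n)" using A w S by (metis add_0_right sum.empty)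
    also have "\<dots> = p ^ 2 * (\<Sum>j<M. e (j + 2) * p ^ j)" by (rule sum_shift2[OF e01])
    finally have "p ^ 2 * (\<Sum>j<M. e (j + 2) * p ^ j) = p ^ 2 * k" by (rule sym)
    moreover have "p ^ 2 \<noteq> 0" using p by simp
    ultimately show ?thesis using mult_left_cancel[of "p ^ 2" _ k] by simp
  qed
  have "e n = (if 2 \<le> n then k div p ^ (n - 2) mod p else 0)" for n
  proof (cases "2 \<le> n")
    case True
    have dg: "\<forall>j. e (j + 2) < p" using dig by simp
    have lt: "n - 2 < N + n" using True by linarith
    have "e ((n - 2) + 2) = (\<Sum>j<N + n. e (j + 2) * p ^ j) div p ^ (n - 2) mod p"
      using digit_unique[of "\<lambda>j. e (j + 2)" p "n - 2" "N + n", OF dg lt] by simp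
    moreover have "Suc (Suc (n - 2)) = n" using True by simp
    ultimately show ?thesis using True sumk[of "N + n"] by simp
  next
    case False
    hence "n = 0 \<or> n = 1" by auto
    thus ?thesis using e01 by auto
  qed
  hence "e = (\<lambda>n. if 2 \<le> n then k div p ^ (n - 2) mod p else 0)" by auto
  thus ?thesis using S by (simp add: bz_def)
qed

lemma bz_props:
  assumes "i \<le> 1" "2 \<le> p"
  shows "bz i p k \<in> W2basis p k" "act i p (bz i p k) = {}"
    "\<And>m. m \<in> W2basis p k \<Longrightarrow> act i p m = {} \<Longrightarrow> m = bz i p k"
proof -
  have i: "i = 0 \<or> i = 1" using assms by auto
  show "bz i p k \<in> W2basis p k" "act i p (bz i p k) = {}"
    using i bz0_props bz1_props[OF assms(2)] by auto
  fix m assume "m \<in> W2basis p k" "act i p m = {}"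
  thus "m = bz i p k" using i bz0_unique_aux[OF _ _ assms(2)] bz1_unique_aux[OF _ _ assms(2)]
    by (cases m) auto
qed



lemma vs_fscale: "vector_space (fscale :: 'f::field \<Rightarrow> (mono \<Rightarrow> 'f) \<Rightarrow> (mono \<Rightarrow> 'f))"
  by unfold_locales (simp_all add: fscale_def fun_eq_iff algebra_simps)

lemma fun_sum_apply: "finite A \<Longrightarrow> (\<Sum>a\<in>A. f a) x = (\<Sum>a\<in>A. f a x)"
  by (induction A rule: finite_induct) simp_all

lemma dim_step:
  fixes K I W :: "(mono \<Rightarrow> 'f::field) set" and x0 :: "mono \<Rightarrow> 'f"
  assumes "I \<subseteq> K" "x0 \<in> K" "K \<subseteq> module.span fscale (insert x0 I)"
    "x0 \<notin> module.span fscale I" "finite W" "I \<subseteq> module.span fscale W"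
  shows "vector_space.dim (fscale :: 'f \<Rightarrow> _) K = vector_space.dim (fscale :: 'f \<Rightarrow> _) I + 1"
proof -
  interpret fs: vector_space "fscale :: 'f \<Rightarrow> (mono \<Rightarrow> 'f) \<Rightarrow> _" by (rule vs_fscale)
  have "fs.span K \<subseteq> fs.span (insert x0 I)"
    using fs.span_mono[OF assms(3)] fs.span_span by blast
  moreover have "fs.span (insert x0 I) \<subseteq> fs.span K"
    using assms(1,2) by (intro fs.span_mono) auto
  ultimately have "fs.span K = fs.span (insert x0 I)" by blast
  hence 1: "fs.dim K = fs.dim (insert x0 I)" by (metis fs.dim_span)
  obtain B where B: "B \<subseteq> I" "fs.independent B" "I \<subseteq> fs.span B" "card B = fs.dim I"
    by (rule fs.basis_exists)
  have fB: "finite B" using fs.independent_span_bound[OF assms(5) B(2)] B(1) assms(6) by blast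
  have spB: "fs.span B = fs.span I"
    using B(1,3) fs.span_mono fs.span_span by (metis subset_antisym)
  have x0B: "x0 \<notin> fs.span B" using assms(4) spB by simp
  hence x0B': "x0 \<notin> B" using fs.span_base by blast
  have ind: "fs.independent (insert x0 B)" by (rule fs.independent_insertI[OF x0B B(2)])
  have "fs.span (insert x0 B) = fs.span (insert x0 I)"
  proof
    show "fs.span (insert x0 B) \<subseteq> fs.span (insert x0 I)" using B(1) by (intro fs.span_mono) auto
    have "insert x0 I \<subseteq> fs.span (insert x0 B)"
      using B(3) fs.span_mono[of B "insert x0 B"] fs.span_base[of x0 "insert x0 B"] by auto
    thus "fs.span (insert x0 I) \<subseteq> fs.span (insert x0 B)"
      using fs.span_mono fs.span_span by metis
  qed
  hence "fs.dim (insert x0 I) = card (insert x0 B)" using fs.dim_eq_card[OF _ ind] by simp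
  also have "\<dots> = fs.dim I + 1" using fB x0B' B(4) by simp
  finally show ?thesis using 1 by simp
qed

lemma swap_lemma:
  fixes v :: "mono \<Rightarrow> 'f::comm_ring_1"
  assumes "finite B"
  shows "(\<Sum>m'\<in>B. (\<Sum>m\<in>B. v m * X m m') * Y m') = (\<Sum>m\<in>B. v m * (\<Sum>m'\<in>B. X m m' * Y m'))"
proof -
  have "(\<Sum>m'\<in>B. (\<Sum>m\<in>B. v m * X m m') * Y m') = (\<Sum>m'\<in>B. \<Sum>m\<in>B. v m * (X m m' * Y m'))"
    by (simp add: sum_distrib_right mult.assoc)
  also have "\<dots> = (\<Sum>m\<in>B. \<Sum>m'\<in>B. v m * (X m m' * Y m'))" by (rule sum.swap)
  also have "\<dots> = (\<Sum>m\<in>B. v m * (\<Sum>m'\<in>B. X m m' * Y m'))" by (simp add: sum_distrib_left)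
  finally show ?thesis .
qed

lemma ms_B:
  assumes "m \<in> W2basis p k" "s \<in> snd m"
  shows "(Qtarget i p s (fst m), snd m - {s}) \<in> W2basis p k"
  using assms Rmono_Qtarget[of m s i p] wt_Qtarget[of m s p i] by (auto simp: W2basis_def)

lemma up_B:
  assumes "m \<in> W2basis p k" "isup i p m"
  shows "upm i p m \<in> W2basis p k"
  using assms up_props[of m i p] by (auto simp: W2basis_def)

lemma Qc_sum:
  fixes \<phi> :: "mono \<Rightarrow> 'f::comm_ring_1"
  assumes fB: "finite (W2basis p k)" and mB: "m \<in> W2basis p k"
  shows "(\<Sum>m'\<in>W2basis p k. Qcoef i p m m' * \<phi> m')
    = (\<Sum>s\<in>snd m. sg (snd m) s * \<phi> (Qtarget i p s (fst m), snd m - {s}))"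
proof -
  let ?B = "W2basis p k"
  have "(\<Sum>m'\<in>?B. Qcoef i p m m' * \<phi> m')
      = (\<Sum>m'\<in>?B. \<Sum>s\<in>snd m. (if m' = (Qtarget i p s (fst m), snd m - {s}) then sg (snd m) s * \<phi> m' else 0))"
    unfolding Qcoef_sg sum_distrib_right by (intro sum.cong refl) simp
  also have "\<dots> = (\<Sum>s\<in>snd m. \<Sum>m'\<in>?B. (if m' = (Qtarget i p s (fst m), snd m - {s}) then sg (snd m) s * \<phi> m' else 0))"
    by (rule sum.swap)
  also have "\<dots> = (\<Sum>s\<in>snd m. sg (snd m) s * \<phi> (Qtarget i p s (fst m), snd m - {s}))"
  proof (rule sum.cong[OF refl])
    fix s assume "s \<in> snd m"
    hence "(Qtarget i p s (fst m), snd m - {s}) \<in> ?B" using ms_B[OF mB] by blast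
    thus "(\<Sum>m'\<in>?B. (if m' = (Qtarget i p s (fst m), snd m - {s}) then sg (snd m) s * \<phi> m' else 0))
      = sg (snd m) s * \<phi> (Qtarget i p s (fst m), snd m - {s})"
      using fB by (simp add: sum.delta' cong: if_cong)
  qed
  finally show ?thesis .
qed

definition Hc :: "nat \<Rightarrow> nat \<Rightarrow> mono \<Rightarrow> mono \<Rightarrow> 'f::comm_ring_1" where
  "Hc i p m m' = (if isup i p m \<and> upm i p m = m' then 1 else 0)"

lemma Hc_sum:
  fixes \<phi> :: "mono \<Rightarrow> 'f::comm_ring_1"
  assumes fB: "finite (W2basis p k)" and mB: "m \<in> W2basis p k"
  shows "(\<Sum>m'\<in>W2basis p k. Hc i p m m' * \<phi> m') = (if isup i p m then \<phi> (upm i p m) else 0)"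
proof (cases "isup i p m")
  case True
  have "upm i p m \<in> W2basis p k" using up_B[OF mB True] .
  have "(\<Sum>m'\<in>W2basis p k. Hc i p m m' * \<phi> m') = (\<Sum>m'\<in>W2basis p k. if upm i p m = m' then \<phi> m' else 0)"
    by (intro sum.cong refl) (simp add: Hc_def True)
  thus ?thesis using True fB \<open>upm i p m \<in> W2basis p k\<close> by (simp add: sum.delta)
next
  case False thus ?thesis by (simp add: Hc_def)
qed


lemma main_dim:
  fixes k :: nat
  assumes two: "(2::'f::field) \<noteq> 0" and i: "i \<le> 1" and p: "2 \<le> p"
  shows "margolis_dim TYPE('f) i p k = 1"
proof -
  interpret fs: vector_space "fscale :: 'f \<Rightarrow> (mono \<Rightarrow> 'f) \<Rightarrow> _" by (rule vs_fscale)
  let ?B = "W2basis p k"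
  have fB: "finite ?B" by (rule finite_B[OF p])
  define b0 where "b0 = bz i p k"
  have b0B: "b0 \<in> ?B" and ab0: "act i p b0 = {}"
    and uniq: "\<And>m. m \<in> ?B \<Longrightarrow> act i p m = {} \<Longrightarrow> m = b0"
    using bz_props[OF i p] b0_def by auto
  have sb0: "snd b0 = {}" by (simp add: b0_def bz_def)
  define dl :: "mono \<Rightarrow> mono \<Rightarrow> 'f" where "dl = (\<lambda>m x. if x = m then 1 else 0)"
  define H :: "(mono \<Rightarrow> 'f) \<Rightarrow> (mono \<Rightarrow> 'f)" where "H = (\<lambda>v m'. \<Sum>m\<in>?B. v m * Hc i p m m')"
  define K where "K = {v \<in> (Wspace p k :: (mono \<Rightarrow> 'f) set). Qmap i p k v = 0}"
  define I where "I = Qmap i p k ` (Wspace p k :: (mono \<Rightarrow> 'f) set)"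
  have QW: "Qmap i p k v \<in> Wspace p k" for v :: "mono \<Rightarrow> 'f"
  proof -
    have "m' \<in> ?B" if nz: "Qmap i p k v m' \<noteq> 0" for m'
    proof -
      from nz have "(\<Sum>m\<in>?B. v m * Qcoef i p m m') \<noteq> 0" unfolding Qmap_def .
      then obtain m where mB: "m \<in> ?B" and "v m * Qcoef i p m m' \<noteq> 0"
        by (rule sum.not_neutral_contains_not_neutral)
      hence "Qcoef i p m m' \<noteq> (0::'f)" by auto
      hence "(\<Sum>s\<in>snd m. if m' = (Qtarget i p s (fst m), snd m - {s}) then sg (snd m) s else (0::'f)) \<noteq> 0"
        unfolding Qcoef_sg .
      then obtain s where sS: "s \<in> snd m"
        and "(if m' = (Qtarget i p s (fst m), snd m - {s}) then sg (snd m) s else (0::'f)) \<noteq> 0"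
        by (rule sum.not_neutral_contains_not_neutral)
      hence "m' = (Qtarget i p s (fst m), snd m - {s})" by (auto split: if_splits)
      thus ?thesis using ms_B[OF mB sS] by simp
    qed
    thus ?thesis by (auto simp: Wspace_def)
  qed
  have HW: "H v \<in> Wspace p k" for v
  proof -
    have "m' \<in> ?B" if nz: "H v m' \<noteq> 0" for m'
    proof -
      from nz have "(\<Sum>m\<in>?B. v m * Hc i p m m') \<noteq> (0::'f)" unfolding H_def .
      then obtain m where mB: "m \<in> ?B" and "v m * Hc i p m m' \<noteq> (0::'f)"
        by (rule sum.not_neutral_contains_not_neutral)
      hence "Hc i p m m' \<noteq> (0::'f)" by auto
      hence "isup i p m" "upm i p m = m'" by (auto simp: Hc_def split: if_splits)
      thus ?thesis using up_B[OF mB] by auto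
    qed
    thus ?thesis by (auto simp: Wspace_def)
  qed
  have QQ: "Qmap i p k (Qmap i p k v) = 0" for v :: "mono \<Rightarrow> 'f"
  proof
    fix m''
    have "Qmap i p k (Qmap i p k v) m'' = (\<Sum>m\<in>?B. v m * (\<Sum>m'\<in>?B. Qcoef i p m m' * Qcoef i p m' m''))"
      unfolding Qmap_def by (rule swap_lemma[OF fB])
    also have "\<dots> = (\<Sum>m\<in>?B. v m * 0)"
    proof (rule sum.cong[OF refl])
      fix m assume mB: "m \<in> ?B"
      have R: "is_Rmono m" using mB by (simp add: W2basis_def)
      have "(\<Sum>m'\<in>?B. Qcoef i p m m' * Qcoef i p m' m'') = (0::'f)"
        using Qc_sum[OF fB mB, of i "\<lambda>m'. Qcoef i p m' m''"] dd_zero[OF R two, of i p m''] by (rule trans)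
      thus "v m * (\<Sum>m'\<in>?B. Qcoef i p m m' * Qcoef i p m' m'') = v m * (0::'f)" by simp
    qed
    finally show "Qmap i p k (Qmap i p k v) m'' = 0 m''" by simp
  qed
  have homot: "Qmap i p k (H v) m'' + H (Qmap i p k v) m'' = v m'' - (if m'' = b0 then v b0 else 0)"
    if vW: "v \<in> Wspace p k" for v m''
  proof -
    have "Qmap i p k (H v) m'' = (\<Sum>m\<in>?B. v m * (\<Sum>m'\<in>?B. Hc i p m m' * Qcoef i p m' m''))"
      unfolding Qmap_def H_def by (rule swap_lemma[OF fB])
    moreover have "H (Qmap i p k v) m'' = (\<Sum>m\<in>?B. v m * (\<Sum>m'\<in>?B. Qcoef i p m m' * Hc i p m' m''))"
      unfolding Qmap_def H_def by (rule swap_lemma[OF fB])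
    ultimately have "Qmap i p k (H v) m'' + H (Qmap i p k v) m''
        = (\<Sum>m\<in>?B. v m * ((\<Sum>m'\<in>?B. Hc i p m m' * Qcoef i p m' m'') + (\<Sum>m'\<in>?B. Qcoef i p m m' * Hc i p m' m'')))"
      by (simp add: sum.distrib distrib_left)
    also have "\<dots> = (\<Sum>m\<in>?B. if m = m'' then (if act i p m'' \<noteq> {} then v m'' else 0) else 0)"
    proof (rule sum.cong[OF refl])
      fix m assume mB: "m \<in> ?B"
      have R: "is_Rmono m" using mB by (simp add: W2basis_def)
      have "(\<Sum>m'\<in>?B. Hc i p m m' * Qcoef i p m' m'') + (\<Sum>m'\<in>?B. Qcoef i p m m' * Hc i p m' m'')
          = (if m'' = m \<and> act i p m \<noteq> {} then 1 else (0::'f))"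
        unfolding Hc_sum[OF fB mB] unfolding Qc_sum[OF fB mB] unfolding Hc_def by (rule core[OF R])
      thus "v m * ((\<Sum>m'\<in>?B. Hc i p m m' * Qcoef i p m' m'') + (\<Sum>m'\<in>?B. Qcoef i p m m' * Hc i p m' m''))
        = (if m = m'' then (if act i p m'' \<noteq> {} then v m'' else 0) else 0)" by auto
    qed
    also have "\<dots> = (if m'' \<in> ?B then (if act i p m'' \<noteq> {} then v m'' else 0) else 0)"
      using fB by (simp add: sum.delta')
    also have "\<dots> = v m'' - (if m'' = b0 then v b0 else 0)"
    proof (cases "m'' \<in> ?B")
      case True
      show ?thesis
      proof (cases "m'' = b0")
        case True2: True
        thus ?thesis using ab0 by simp
      next
        case False2: False
        hence "act i p m'' \<noteq> {}" using uniq[OF True] by blast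
        thus ?thesis using True False2 by simp
      qed
    next
      case False
      have "\<forall>m. v m \<noteq> 0 \<longrightarrow> m \<in> ?B" using vW by (simp only: Wspace_def mem_Collect_eq)
      hence "v m'' = 0" using False by blast
      moreover have "m'' \<noteq> b0" using False b0B by blast
      ultimately show ?thesis using False by simp
    qed
    finally show ?thesis .
  qed
  have IK: "I \<subseteq> K" using QW QQ by (auto simp: I_def K_def)
  have dW: "dl b0 \<in> Wspace p k" using b0B by (auto simp: Wspace_def dl_def)
  have Qd: "Qmap i p k (dl b0) = 0"
  proof
    fix m''
    have "Qmap i p k (dl b0) m'' = (\<Sum>m\<in>?B. if m = b0 then Qcoef i p m m'' else 0)"
      unfolding Qmap_def dl_def by (intro sum.cong refl) simp
    also have "\<dots> = Qcoef i p b0 m''" using fB b0B by (simp add: sum.delta')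
    also have "\<dots> = 0" by (simp add: Qcoef_def sb0)
    finally show "Qmap i p k (dl b0) m'' = 0 m''" by simp
  qed
  have dK: "dl b0 \<in> K" using dW Qd by (simp add: K_def)
  have Kspan: "K \<subseteq> fs.span (insert (dl b0) I)"
  proof
    fix v assume "v \<in> K"
    hence vW: "v \<in> Wspace p k" and Qv: "Qmap i p k v = 0" by (auto simp: K_def)
    have H0: "H 0 = 0" by (simp add: H_def fun_eq_iff)
    have eq: "v = Qmap i p k (H v) + fscale (v b0) (dl b0)"
    proof
      fix m''
      show "v m'' = (Qmap i p k (H v) + fscale (v b0) (dl b0)) m''"
        using homot[OF vW, of m''] Qv H0 by (auto simp: fscale_def dl_def)
    qed
    have "Qmap i p k (H v) \<in> fs.span (insert (dl b0) I)"
      using HW by (intro fs.span_base) (auto simp: I_def)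
    moreover have "fscale (v b0) (dl b0) \<in> fs.span (insert (dl b0) I)"
      by (intro fs.span_scale fs.span_base) simp
    ultimately show "v \<in> fs.span (insert (dl b0) I)" using eq fs.span_add by metis
  qed
  have Qc_b0: "Qcoef i p m b0 = (0::'f)" if mB: "m \<in> ?B" for m
  proof -
    have "(if b0 = (Qtarget i p s (fst m), snd m - {s}) then sg (snd m) s else (0::'f)) = 0"
      if sS: "s \<in> snd m" for s
    proof (rule ccontr)
      assume "\<not> ?thesis"
      hence eqb: "b0 = (Qtarget i p s (fst m), snd m - {s})" by (auto split: if_splits)
      have s3: "3 \<le> s" using mB sS by (auto simp: W2basis_def is_Rmono_def)
      have "qq i p \<le> fst b0 (gg i s)" using eqb by (simp add: Qtarget_alt)
      hence "s \<in> act i p b0" using s3 by (simp add: act_def)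
      thus False using ab0 by simp
    qed
    thus ?thesis unfolding Qcoef_sg by (intro sum.neutral) auto
  qed
  have notin: "dl b0 \<notin> fs.span I"
  proof
    assume a: "dl b0 \<in> fs.span I"
    have sub: "fs.subspace {x :: mono \<Rightarrow> 'f. x b0 = 0}"
      unfolding fs.subspace_def by (simp add: fscale_def)
    have "I \<subseteq> {x. x b0 = 0}"
    proof
      fix x assume "x \<in> I"
      then obtain v where "x = Qmap i p k v" by (auto simp: I_def)
      thus "x \<in> {x. x b0 = 0}" using Qc_b0 by (simp add: Qmap_def)
    qed
    hence "fs.span I \<subseteq> {x. x b0 = 0}" using fs.span_minimal sub by blast
    thus False using a by (auto simp: dl_def)
  qed
  have Wsp: "I \<subseteq> fs.span (dl ` ?B)"
  proof
    fix x assume "x \<in> I"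
    then obtain v where xv: "x = Qmap i p k v" by (auto simp: I_def)
    have vW: "x \<in> Wspace p k" using xv QW by simp
    have "x = (\<Sum>m\<in>?B. fscale (x m) (dl m))"
    proof
      fix y
      have "(\<Sum>m\<in>?B. fscale (x m) (dl m)) y = (\<Sum>m\<in>?B. if m = y then x y else 0)"
        unfolding fun_sum_apply[OF fB] by (intro sum.cong refl) (auto simp: fscale_def dl_def)
      also have "\<dots> = x y"
      proof -
        have xs: "\<forall>m. x m \<noteq> 0 \<longrightarrow> m \<in> ?B" using vW by (simp only: Wspace_def mem_Collect_eq)
        show ?thesis
        proof (cases "y \<in> ?B")
          case True thus ?thesis using fB by (simp add: sum.delta')
        next
          case False
          hence "x y = 0" using xs by blast
          thus ?thesis using False fB by (simp add: sum.delta')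
        qed
      qed
      finally show "x y = (\<Sum>m\<in>?B. fscale (x m) (dl m)) y" by simp
    qed
    moreover have "(\<Sum>m\<in>?B. fscale (x m) (dl m)) \<in> fs.span (dl ` ?B)"
      by (intro fs.span_sum fs.span_scale fs.span_base) auto
    ultimately show "x \<in> fs.span (dl ` ?B)" by simp
  qed
  have "fs.dim K = fs.dim I + 1"
    by (rule dim_step[OF IK dK Kspan notin _ Wsp]) (simp add: fB)
  thus ?thesis unfolding margolis_dim_def K_def I_def by simp
qed


theorem mainTheorem7:
  fixes k :: nat
  assumes "odd CARD('p::prime_card)"
  shows "margolis_dim TYPE('p mod_ring) 0 CARD('p) k = 1
       \<and> margolis_dim TYPE('p mod_ring) 1 CARD('p) k = 1"
proof -
  have pr: "prime CARD('p)" by (rule prime_card)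
  have p2: "2 \<le> CARD('p)" using prime_ge_2_nat[OF pr] .
  have two: "(2::'p mod_ring) \<noteq> 0"
  proof
    assume "(2::'p mod_ring) = 0"
    hence "(of_nat 2 :: 'p mod_ring) = 0" by simp
    hence "CARD('p) dvd 2" by (rule of_nat_0_mod_ring_dvd)
    hence "CARD('p) \<le> 2" by (rule dvd_imp_le) simp
    hence "CARD('p) = 2" using p2 by simp
    thus False using assms by simp
  qed
  show ?thesis using main_dim[OF two, of 0 "CARD('p)" k] main_dim[OF two, of 1 "CARD('p)" k] p2 by simp
qed

end
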